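(* There exists an absolute constant $C>0$ such that the following holds for every integer $n\ge 2$. Let $\mathcal{S}$ be a family of $n$ curves in the plane, each colored red or blue, such that every curve is $x$-monotone and no two curves of the same color intersect. Then the number of tangencies between curves of $\mathcal{S}$ is at most $C\, n\log n$.
   Context: A curve is a simple planar curve (Jordan arc), i.e., the image of an injective continuous map from an (open or closed) interval into the plane. A curve is $x$-monotone if every vertical line meets it in at most one point. It is assumed that any two curves intersect in finitely many points and that no three curves pass through a common point. An intersection point $p$ of two curves is a crossing point if there is a Jordan region $D$ containing $p$ but no other intersection point of the two curves in its interior, such that each curve meets the boundary of $D$ in exactly two points and in the cyclic order of these four points no two consecutive points belong to the same curve. Two curves touch at a tangency point $p$ if both contain $p$ in their relative interior, $p$ is their only intersection point, and $p$ is not a crossing point. The number of tangencies is the number of such tangency points (equivalently, of touching pairs of curves). *)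

theory Defs
  imports "HOL-Analysis.Analysis"
begin

text \<open>The curve (as a point set) is gamma ` I, its relative
  interior (the curve without its endpoints) is gamma ` interior I.\<close>

definition curve_param :: "real set \<Rightarrow> (real \<Rightarrow> real \<times> real) \<Rightarrow> bool" where
  "curve_param I \<gamma> \<longleftrightarrow> is_interval I \<and> (open I \<or> closed I) \<and> interior I \<noteq> {}
     \<and> continuous_on I \<gamma> \<and> inj_on \<gamma> I"

definition x_monotone :: "(real \<times> real) set \<Rightarrow> bool" where
  "x_monotone S \<longleftrightarrow> (\<forall>p\<in>S. \<forall>q\<in>S. fst p = fst q \<longrightarrow> p = q)"

definition jordan_region :: "(real \<Rightarrow> real \<times> real) \<Rightarrow> (real \<times> real) set" where
  "jordan_region c = path_image c \<union> inside (path_image c)"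

definition crossing_point :: "(real \<times> real) set \<Rightarrow> (real \<times> real) set \<Rightarrow> real \<times> real \<Rightarrow> bool" where
  "crossing_point A B p \<longleftrightarrow> p \<in> A \<inter> B \<and>
    (\<exists>c. simple_path c \<and> pathfinish c = pathstart c \<and>
       p \<in> interior (jordan_region c) \<and>
       A \<inter> B \<inter> interior (jordan_region c) = {p} \<and>
       (\<exists>s1 s2 s3 s4. 0 \<le> s1 \<and> s1 < s2 \<and> s2 < s3 \<and> s3 < s4 \<and> s4 < 1 \<and>
          ((A \<inter> path_image c = {c s1, c s3} \<and> B \<inter> path_image c = {c s2, c s4}) \<or>
           (B \<inter> path_image c = {c s1, c s3} \<and> A \<inter> path_image c = {c s2, c s4}))))"

definition touching :: "real set \<Rightarrow> (real \<Rightarrow> real \<times> real) \<Rightarrow> real set \<Rightarrow> (real \<Rightarrow> real \<times> real) \<Rightarrow> bool" where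
  "touching I \<gamma> J \<delta> \<longleftrightarrow> (\<exists>p. p \<in> \<gamma> ` interior I \<and> p \<in> \<delta> ` interior J \<and>
      \<gamma> ` I \<inter> \<delta> ` J = {p} \<and> \<not> crossing_point (\<gamma> ` I) (\<delta> ` J) p)"

end

theory Submission
  imports Defs "HOL-Analysis.Analysis"
begin

definition hC :: "complex \<Rightarrow> real \<times> real" where "hC z = (Re z, Im z)"

lemma linear_hC: "linear hC"
  unfolding hC_def by (intro linearI) (auto simp: scaleR_prod_def)

lemma inj_hC: "inj hC"
  unfolding hC_def inj_def by (simp add: complex_eq_iff)

lemma rect_right:
  assumes "0 < t" "t < 1"
  shows "(hC \<circ> rectpath (Complex xl (-H)) (Complex xr H)) ((t+2)/4) = (xr, -H + 2*H*t)"
  using assms by (simp add: hC_def rectpath_def Let_def joinpaths_def linepath_def field_simps)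

lemma rect_left:
  assumes "0 < t" "t < 1"
  shows "(hC \<circ> rectpath (Complex xl (-H)) (Complex xr H)) ((t+7)/8) = (xl, H - 2*H*t)"
  using assms by (simp add: hC_def rectpath_def Let_def joinpaths_def linepath_def field_simps)

lemma rect_image:
  assumes "xl < xr" "0 < H"
  shows "path_image (hC \<circ> rectpath (Complex xl (-H)) (Complex xr H)) =
     ({xl..xr} \<times> {-H..H}) - ({xl<..<xr} \<times> {-H<..<H})"
proof -
  have "path_image (hC \<circ> rectpath (Complex xl (-H)) (Complex xr H)) =
        hC ` path_image (rectpath (Complex xl (-H)) (Complex xr H))"
    by (simp add: path_image_compose)
  also have "\<dots> = ({xl..xr} \<times> {-H..H}) - ({xl<..<xr} \<times> {-H<..<H})"
  proof (rule set_eqI, rule iffI)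
    fix q assume "q \<in> hC ` path_image (rectpath (Complex xl (-H)) (Complex xr H))"
    then show "q \<in> ({xl..xr} \<times> {-H..H}) - ({xl<..<xr} \<times> {-H<..<H})"
      using assms by (auto simp: path_image_rectpath hC_def)
  next
    fix q assume q: "q \<in> ({xl..xr} \<times> {-H..H}) - ({xl<..<xr} \<times> {-H<..<H})"
    obtain x y where qe: "q = (x,y)" by (cases q)
    have "Complex x y \<in> path_image (rectpath (Complex xl (-H)) (Complex xr H))"
      using q assms unfolding qe by (auto simp: path_image_rectpath)
    moreover have "q = hC (Complex x y)" by (simp add: hC_def qe)
    ultimately show "q \<in> hC ` path_image (rectpath (Complex xl (-H)) (Complex xr H))" by blast
  qed
  finally show ?thesis .
qed

lemma rect_jordan:
  assumes "xl < xr" "0 < H"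
  shows "interior (jordan_region (hC \<circ> rectpath (Complex xl (-H)) (Complex xr H))) =
     {xl<..<xr} \<times> {-H<..<H}"
proof -
  define R where "R = {xl..xr} \<times> {-H..H}"
  have iR: "interior R = {xl<..<xr} \<times> {-H<..<H}"
    unfolding R_def interior_Times using assms by simp
  have fR: "frontier R = R - interior R"
    unfolding frontier_def R_def by (simp add: closed_Times)
  have pim: "path_image (hC \<circ> rectpath (Complex xl (-H)) (Complex xr H)) = frontier R"
    using rect_image[OF assms] fR iR R_def by simp
  have "inside (frontier R) = interior R"
    by (rule inside_frontier_eq_interior) (auto simp: R_def bounded_Times convex_Times)
  then have "jordan_region (hC \<circ> rectpath (Complex xl (-H)) (Complex xr H)) = R"
    unfolding jordan_region_def pim using fR interior_subset by blast
  then show ?thesis using iR by simp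
qed

lemma rect_simple:
  assumes "xl < xr" "0 < H"
  shows "simple_path (hC \<circ> rectpath (Complex xl (-H)) (Complex xr H))"
        "pathfinish (hC \<circ> rectpath (Complex xl (-H)) (Complex xr H)) =
         pathstart (hC \<circ> rectpath (Complex xl (-H)) (Complex xr H))"
  using assms by (auto simp: simple_path_linear_image_eq[OF linear_hC inj_hC] pathstart_compose pathfinish_compose)

lemma cont_bound:
  fixes f :: "real \<Rightarrow> real"
  assumes "continuous_on {a..b} f"
  obtains M where "\<forall>x\<in>{a..b}. \<bar>f x\<bar> \<le> M"
proof -
  have "compact (f ` {a..b})" by (rule compact_continuous_image[OF assms compact_Icc])
  then have "bounded (f ` {a..b})" by (rule compact_imp_bounded)
  then obtain M where "\<forall>y\<in>f ` {a..b}. \<bar>y\<bar> \<le> M" by (auto simp: bounded_real)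
  then show ?thesis using that by auto
qed

lemma rect_crossing:
  fixes A B :: "(real \<times> real) set" and fa fb :: "real \<Rightarrow> real"
  assumes lr: "xl < x0" "x0 < xr"
    and AB: "A \<inter> B = {(x0, fa x0)}"
    and hA: "\<And>x y. x \<in> {xl..xr} \<Longrightarrow> (x,y) \<in> A \<longleftrightarrow> y = fa x"
    and hB: "\<And>x y. x \<in> {xl..xr} \<Longrightarrow> (x,y) \<in> B \<longleftrightarrow> y = fb x"
    and ca: "continuous_on {xl..xr} fa" and cb: "continuous_on {xl..xr} fb"
    and sg: "(fa xl > fb xl \<and> fa xr < fb xr) \<or> (fa xl < fb xl \<and> fa xr > fb xr)"
  shows "crossing_point A B (x0, fa x0)"
proof -
  obtain Ma where Ma: "\<forall>x\<in>{xl..xr}. \<bar>fa x\<bar> \<le> Ma" using cont_bound[OF ca] by blast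
  obtain Mb where Mb: "\<forall>x\<in>{xl..xr}. \<bar>fb x\<bar> \<le> Mb" using cont_bound[OF cb] by blast
  have x0i: "x0 \<in> {xl..xr}" using lr by auto
  have Ma0: "0 \<le> Ma" using Ma x0i by force
  have Mb0: "0 \<le> Mb" using Mb x0i by force
  define H where "H = Ma + Mb + 1"
  have H0: "0 < H" using Ma0 Mb0 H_def by simp
  have Ha: "\<And>x. x \<in> {xl..xr} \<Longrightarrow> - H < fa x \<and> fa x < H" using Ma Mb0 H_def by force
  have Hb: "\<And>x. x \<in> {xl..xr} \<Longrightarrow> - H < fb x \<and> fb x < H" using Mb Ma0 H_def by force
  define c where "c = hC \<circ> rectpath (Complex xl (-H)) (Complex xr H)"
  have xlr: "xl < xr" using lr by simp
  have sp: "simple_path c" "pathfinish c = pathstart c" using rect_simple[OF xlr H0] c_def by auto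
  have int: "interior (jordan_region c) = {xl<..<xr} \<times> {-H<..<H}"
    using rect_jordan[OF xlr H0] c_def by simp
  have pim: "path_image c = ({xl..xr} \<times> {-H..H}) - ({xl<..<xr} \<times> {-H<..<H})"
    using rect_image[OF xlr H0] c_def by simp
  have pin: "(x0, fa x0) \<in> interior (jordan_region c)"
    unfolding int using lr Ha[OF x0i] by auto
  have AB2: "A \<inter> B \<inter> interior (jordan_region c) = {(x0, fa x0)}"
    using AB pin by auto
  have xlI: "xl \<in> {xl..xr}" and xrI: "xr \<in> {xl..xr}" using xlr by auto
  have gA: "A \<inter> path_image c = {(xl, fa xl), (xr, fa xr)}"
  proof (rule set_eqI, rule iffI)
    fix q assume q: "q \<in> A \<inter> path_image c"
    obtain x y where qe: "q = (x,y)" by (cases q)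
    have xi: "x \<in> {xl..xr}" using q pim qe by auto
    have y: "y = fa x" using hA[OF xi] q qe by auto
    have "\<not> (xl < x \<and> x < xr)" using q pim qe y Ha[OF xi] by auto
    then show "q \<in> {(xl, fa xl), (xr, fa xr)}" using xi y qe by auto
  next
    fix q assume "q \<in> {(xl, fa xl), (xr, fa xr)}"
    then show "q \<in> A \<inter> path_image c"
      using hA[OF xlI] hA[OF xrI] Ha[OF xlI] Ha[OF xrI] pim xlr by auto
  qed
  have gB: "B \<inter> path_image c = {(xl, fb xl), (xr, fb xr)}"
  proof (rule set_eqI, rule iffI)
    fix q assume q: "q \<in> B \<inter> path_image c"
    obtain x y where qe: "q = (x,y)" by (cases q)
    have xi: "x \<in> {xl..xr}" using q pim qe by auto
    have y: "y = fb x" using hB[OF xi] q qe by auto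
    have "\<not> (xl < x \<and> x < xr)" using q pim qe y Hb[OF xi] by auto
    then show "q \<in> {(xl, fb xl), (xr, fb xr)}" using xi y qe by auto
  next
    fix q assume "q \<in> {(xl, fb xl), (xr, fb xr)}"
    then show "q \<in> B \<inter> path_image c"
      using hB[OF xlI] hB[OF xrI] Hb[OF xlI] Hb[OF xrI] pim xlr by auto
  qed
  define tr where "tr = (\<lambda>y. (y + H) / (2*H))"
  define tl where "tl = (\<lambda>y. (H - y) / (2*H))"
  have trp: "\<And>y. -H < y \<Longrightarrow> y < H \<Longrightarrow> 0 < tr y \<and> tr y < 1" using H0 by (auto simp: tr_def field_simps)
  have tlp: "\<And>y. -H < y \<Longrightarrow> y < H \<Longrightarrow> 0 < tl y \<and> tl y < 1" using H0 by (auto simp: tl_def field_simps)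
  have cR: "\<And>y. -H < y \<Longrightarrow> y < H \<Longrightarrow> c ((tr y + 2)/4) = (xr, y)"
  proof -
    fix y assume "-H < y" "y < H"
    then have "c ((tr y + 2)/4) = (xr, -H + 2*H*tr y)" using rect_right trp c_def by blast
    then show "c ((tr y + 2)/4) = (xr, y)" using H0 by (simp add: tr_def)
  qed
  have cL: "\<And>y. -H < y \<Longrightarrow> y < H \<Longrightarrow> c ((tl y + 7)/8) = (xl, y)"
  proof -
    fix y assume "-H < y" "y < H"
    then have "c ((tl y + 7)/8) = (xl, H - 2*H*tl y)" using rect_left tlp c_def by blast
    then show "c ((tl y + 7)/8) = (xl, y)" using H0 by (simp add: tl_def)
  qed
  have trm: "\<And>y z. y < z \<Longrightarrow> tr y < tr z" using H0 by (auto simp: tr_def field_simps)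
  have tlm: "\<And>y z. y < z \<Longrightarrow> tl z < tl y" using H0 by (auto simp: tl_def field_simps)
  note bnds = Ha[OF xlI] Ha[OF xrI] Hb[OF xlI] Hb[OF xrI]
  have EX: "\<exists>s1 s2 s3 s4. 0 \<le> s1 \<and> s1 < s2 \<and> s2 < s3 \<and> s3 < s4 \<and> s4 < 1 \<and>
     (A \<inter> path_image c = {c s1, c s3} \<and> B \<inter> path_image c = {c s2, c s4} \<or>
      B \<inter> path_image c = {c s1, c s3} \<and> A \<inter> path_image c = {c s2, c s4})"
      using sg
    proof
      assume s: "fb xl < fa xl \<and> fa xr < fb xr"
      show ?thesis
      proof (intro exI conjI disjI1)
        show "0 \<le> (tr (fa xr) + 2)/4" using trp bnds by force
        show "(tr (fa xr) + 2)/4 < (tr (fb xr) + 2)/4" using trm s by force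
        show "(tr (fb xr) + 2)/4 < (tl (fa xl) + 7)/8" using trp tlp bnds by force
        show "(tl (fa xl) + 7)/8 < (tl (fb xl) + 7)/8" using tlm s by force
        show "(tl (fb xl) + 7)/8 < 1" using tlp bnds by force
        show "A \<inter> path_image c = {c ((tr (fa xr) + 2)/4), c ((tl (fa xl) + 7)/8)}"
          using gA cR cL bnds by auto
        show "B \<inter> path_image c = {c ((tr (fb xr) + 2)/4), c ((tl (fb xl) + 7)/8)}"
          using gB cR cL bnds by auto
      qed
    next
      assume s: "fa xl < fb xl \<and> fb xr < fa xr"
      show ?thesis
      proof (intro exI conjI disjI2)
        show "0 \<le> (tr (fb xr) + 2)/4" using trp bnds by force
        show "(tr (fb xr) + 2)/4 < (tr (fa xr) + 2)/4" using trm s by force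
        show "(tr (fa xr) + 2)/4 < (tl (fb xl) + 7)/8" using trp tlp bnds by force
        show "(tl (fb xl) + 7)/8 < (tl (fa xl) + 7)/8" using tlm s by force
        show "(tl (fa xl) + 7)/8 < 1" using tlp bnds by force
        show "B \<inter> path_image c = {c ((tr (fb xr) + 2)/4), c ((tl (fb xl) + 7)/8)}"
          using gB cR cL bnds by auto
        show "A \<inter> path_image c = {c ((tr (fa xr) + 2)/4), c ((tl (fa xl) + 7)/8)}"
          using gA cR cL bnds by auto
      qed
    qed
  show ?thesis unfolding crossing_point_def using AB sp pin AB2 EX by blast
qed

definition Xc :: "real set \<Rightarrow> (real \<Rightarrow> real \<times> real) \<Rightarrow> real set" where
  "Xc I \<gamma> = (\<lambda>t. fst (\<gamma> t)) ` I"
definition Uc :: "real set \<Rightarrow> (real \<Rightarrow> real \<times> real) \<Rightarrow> real set" where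
  "Uc I \<gamma> = (\<lambda>t. fst (\<gamma> t)) ` interior I"
definition fc :: "real set \<Rightarrow> (real \<Rightarrow> real \<times> real) \<Rightarrow> real \<Rightarrow> real" where
  "fc I \<gamma> x = snd (\<gamma> (inv_into I (\<lambda>t. fst (\<gamma> t)) x))"

lemma ivt0:
  fixes h :: "real \<Rightarrow> real"
  assumes "a \<le> b" "continuous_on {a..b} h" "(h a \<le> 0 \<and> 0 \<le> h b) \<or> (0 \<le> h a \<and> h b \<le> 0)"
  shows "\<exists>z\<in>{a..b}. h z = 0"
proof -
  have "\<exists>z. a \<le> z \<and> z \<le> b \<and> h z = 0"
    using assms IVT'[of h a 0 b] IVT2'[of h b 0 a] by blast
  then show ?thesis by auto
qed

context
  fixes I :: "real set" and \<gamma> :: "real \<Rightarrow> real \<times> real"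
  assumes cp: "curve_param I \<gamma>" and xm: "x_monotone (\<gamma> ` I)"
begin

lemma g_inj: "inj_on (\<lambda>t. fst (\<gamma> t)) I"
proof (rule inj_onI)
  fix s t assume "s \<in> I" "t \<in> I" "fst (\<gamma> s) = fst (\<gamma> t)"
  then have "\<gamma> s = \<gamma> t" using xm unfolding x_monotone_def by blast
  then show "s = t" using cp \<open>s \<in> I\<close> \<open>t \<in> I\<close> unfolding curve_param_def inj_on_def by blast
qed

lemma g_cont: "continuous_on I (\<lambda>t. fst (\<gamma> t))"
  using cp unfolding curve_param_def by (auto intro: continuous_intros)

lemma graph_iff: "(x, y) \<in> \<gamma> ` I \<longleftrightarrow> x \<in> Xc I \<gamma> \<and> y = fc I \<gamma> x"
proof
  assume "(x, y) \<in> \<gamma> ` I"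
  then obtain t where t: "t \<in> I" "\<gamma> t = (x, y)" by auto
  have "inv_into I (\<lambda>t. fst (\<gamma> t)) x = t"
    using inv_into_f_f[OF g_inj t(1)] t by simp
  then show "x \<in> Xc I \<gamma> \<and> y = fc I \<gamma> x"
    using t unfolding Xc_def fc_def by (auto simp: image_iff intro!: bexI[of _ t])
next
  assume "x \<in> Xc I \<gamma> \<and> y = fc I \<gamma> x"
  then obtain t where t: "t \<in> I" "fst (\<gamma> t) = x" and y: "y = fc I \<gamma> x" unfolding Xc_def by auto
  have "inv_into I (\<lambda>t. fst (\<gamma> t)) x = t"
    using inv_into_f_f[OF g_inj t(1)] t by simp
  then have "\<gamma> t = (x, y)" using t y unfolding fc_def by (metis prod.collapse)
  then show "(x, y) \<in> \<gamma> ` I" using t by force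
qed

lemma fc_cont: "continuous_on (Xc I \<gamma>) (fc I \<gamma>)"
proof -
  have pc: "path_connected I" using cp unfolding curve_param_def by (simp add: is_interval_path_connected)
  obtain h where hom: "homeomorphism I (Xc I \<gamma>) (\<lambda>t. fst (\<gamma> t)) h"
    using homeomorphism_into_1d[OF pc g_cont _ g_inj] unfolding Xc_def by blast
  have eq: "\<And>x. x \<in> Xc I \<gamma> \<Longrightarrow> fc I \<gamma> x = snd (\<gamma> (h x))"
  proof -
    fix x assume x: "x \<in> Xc I \<gamma>"
    have "h x \<in> I" "fst (\<gamma> (h x)) = x" using hom x unfolding homeomorphism_def by auto
    then have "inv_into I (\<lambda>t. fst (\<gamma> t)) x = h x"
      using inv_into_f_f[OF g_inj] by metis
    then show "fc I \<gamma> x = snd (\<gamma> (h x))" unfolding fc_def by simp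
  qed
  have "continuous_on (Xc I \<gamma>) (\<lambda>x. snd (\<gamma> (h x)))"
  proof -
    have "continuous_on (Xc I \<gamma>) h" "h ` Xc I \<gamma> \<subseteq> I" using hom unfolding homeomorphism_def by auto
    moreover have "continuous_on I (\<lambda>t. snd (\<gamma> t))" using cp unfolding curve_param_def
      by (intro continuous_on_snd) simp
    ultimately show ?thesis
      using continuous_on_compose2[of I "\<lambda>t. snd (\<gamma> t)" "Xc I \<gamma>" h] by blast
  qed
  then show ?thesis by (rule continuous_on_eq) (simp add: eq)
qed

lemma U_open: "open (Uc I \<gamma>)"
  unfolding Uc_def
proof (rule invariance_of_domain)
  show "continuous_on (interior I) (\<lambda>t. fst (\<gamma> t))"
    using continuous_on_subset[OF g_cont interior_subset] .
  show "inj_on (\<lambda>t. fst (\<gamma> t)) (interior I)"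
    using inj_on_subset[OF g_inj interior_subset] .
qed simp

lemma U_interval: "is_interval (Uc I \<gamma>)"
proof -
  have "convex I" using cp unfolding curve_param_def by (simp add: is_interval_convex_1)
  then have "connected (interior I)" by (simp add: convex_connected)
  then have "connected (Uc I \<gamma>)" unfolding Uc_def
    by (rule connected_continuous_image[OF continuous_on_subset[OF g_cont interior_subset]])
  then show ?thesis by (simp add: is_interval_connected_1)
qed

lemma U_sub: "Uc I \<gamma> \<subseteq> Xc I \<gamma>"
  unfolding Uc_def Xc_def using interior_subset by blast

lemma interior_pt: "p \<in> \<gamma> ` interior I \<Longrightarrow> fst p \<in> Uc I \<gamma> \<and> p = (fst p, fc I \<gamma> (fst p))"
proof -
  assume "p \<in> \<gamma> ` interior I"
  then obtain t where t: "t \<in> interior I" "p = \<gamma> t" by auto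
  have "fst p \<in> Uc I \<gamma>" using t unfolding Uc_def by auto
  moreover have "p \<in> \<gamma> ` I" using t interior_subset by blast
  then have "(fst p, snd p) \<in> \<gamma> ` I" by simp
  then have "snd p = fc I \<gamma> (fst p)" using graph_iff by blast
  ultimately show ?thesis by (metis prod.collapse)
qed

end

lemma touching_tan:
  assumes cp1: "curve_param I1 g1" and xm1: "x_monotone (g1 ` I1)"
    and cp2: "curve_param I2 g2" and xm2: "x_monotone (g2 ` I2)"
    and tch: "touching I1 g1 I2 g2"
  shows "\<exists>x0. x0 \<in> Uc I1 g1 \<inter> Uc I2 g2 \<and> fc I1 g1 x0 = fc I2 g2 x0 \<and>
     ((\<forall>y\<in>Uc I1 g1 \<inter> Uc I2 g2. fc I1 g1 y \<le> fc I2 g2 y) \<or>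
      (\<forall>y\<in>Uc I1 g1 \<inter> Uc I2 g2. fc I2 g2 y \<le> fc I1 g1 y))"
proof -
  obtain p where p1: "p \<in> g1 ` interior I1" and p2: "p \<in> g2 ` interior I2"
    and pAB: "g1 ` I1 \<inter> g2 ` I2 = {p}" and ncr: "\<not> crossing_point (g1 ` I1) (g2 ` I2) p"
    using tch unfolding touching_def by blast
  define x0 where "x0 = fst p"
  define f1 where "f1 = fc I1 g1"
  define f2 where "f2 = fc I2 g2"
  define V where "V = Uc I1 g1 \<inter> Uc I2 g2"
  have x01: "x0 \<in> Uc I1 g1" and pe1: "p = (x0, f1 x0)"
    using interior_pt[OF cp1 xm1 p1] unfolding x0_def f1_def by blast+
  have x02: "x0 \<in> Uc I2 g2" and pe2: "p = (x0, f2 x0)"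
    using interior_pt[OF cp2 xm2 p2] unfolding x0_def f2_def by blast+
  have eq0: "f1 x0 = f2 x0" using pe1 pe2 by simp
  have Vint: "is_interval V" unfolding V_def
    using U_interval[OF cp1 xm1] U_interval[OF cp2 xm2] by (rule is_interval_Int)
  have VX1: "V \<subseteq> Xc I1 g1" using U_sub[OF cp1 xm1] V_def by auto
  have VX2: "V \<subseteq> Xc I2 g2" using U_sub[OF cp2 xm2] V_def by auto
  have neq: "\<And>y. y \<in> V \<Longrightarrow> f1 y = f2 y \<Longrightarrow> y = x0"
  proof -
    fix y assume y: "y \<in> V" "f1 y = f2 y"
    have X1: "y \<in> Xc I1 g1" using VX1 y(1) by blast
    have A: "(y, f1 y) \<in> g1 ` I1" unfolding f1_def using graph_iff[OF cp1 xm1, of y "fc I1 g1 y"] X1 by simp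
    have X2: "y \<in> Xc I2 g2" using VX2 y(1) by blast
    have B: "(y, f2 y) \<in> g2 ` I2" unfolding f2_def using graph_iff[OF cp2 xm2, of y "fc I2 g2 y"] X2 by simp
    have "(y, f1 y) \<in> g1 ` I1 \<inter> g2 ` I2" using A B y(2) by simp
    then have "(y, f1 y) = p" using pAB by blast
    then have "y = fst p" by (metis fst_conv)
    then show "y = x0" by (simp add: x0_def)
  qed
  have seg: "\<And>a b. a \<in> V \<Longrightarrow> b \<in> V \<Longrightarrow> {min a b..max a b} \<subseteq> V"
  proof -
    fix a b assume ab: "a \<in> V" "b \<in> V"
    have m: "min a b \<in> V" "max a b \<in> V" using ab by (simp_all add: min_def max_def)
    show "{min a b..max a b} \<subseteq> V"
    proof
      fix x assume "x \<in> {min a b..max a b}"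
      then have "min a b \<le> x" "x \<le> max a b" by auto
      then show "x \<in> V" using Vint m unfolding is_interval_1 by blast
    qed
  qed
  have hcont: "\<And>a b. a \<in> V \<Longrightarrow> b \<in> V \<Longrightarrow> continuous_on {min a b..max a b} (\<lambda>y. f1 y - f2 y)"
  proof -
    fix a b assume "a \<in> V" "b \<in> V"
    then have s: "{min a b..max a b} \<subseteq> V" by (rule seg)
    show "continuous_on {min a b..max a b} (\<lambda>y. f1 y - f2 y)"
      using continuous_on_subset[OF fc_cont[OF cp1 xm1]] continuous_on_subset[OF fc_cont[OF cp2 xm2]]
        s VX1 VX2 unfolding f1_def f2_def by (intro continuous_intros) auto
  qed
  have c1: "\<And>a b. a \<in> V \<Longrightarrow> b \<in> V \<Longrightarrow> continuous_on {min a b..max a b} f1"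
    using continuous_on_subset[OF fc_cont[OF cp1 xm1]] seg VX1 unfolding f1_def by (meson subset_trans)
  have c2: "\<And>a b. a \<in> V \<Longrightarrow> b \<in> V \<Longrightarrow> continuous_on {min a b..max a b} f2"
    using continuous_on_subset[OF fc_cont[OF cp2 xm2]] seg VX2 unfolding f2_def by (meson subset_trans)
  have main: "(\<forall>y\<in>V. f1 y \<le> f2 y) \<or> (\<forall>y\<in>V. f2 y \<le> f1 y)"
  proof (rule ccontr)
    assume "\<not> ?thesis"
    then obtain a b where a: "a \<in> V" "f1 a > f2 a" and b: "b \<in> V" "f2 b > f1 b"
      by (auto simp: not_le)
    have ax: "a \<noteq> x0" using a eq0 by auto
    have bx: "b \<noteq> x0" using b eq0 by auto
    obtain z where z: "z \<in> {min a b..max a b}" "f1 z - f2 z = 0"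
    proof -
      have "min a b \<le> max a b" by simp
      moreover have "((\<lambda>y. f1 y - f2 y) (min a b) \<le> 0 \<and> 0 \<le> (\<lambda>y. f1 y - f2 y) (max a b)) \<or>
          (0 \<le> (\<lambda>y. f1 y - f2 y) (min a b) \<and> (\<lambda>y. f1 y - f2 y) (max a b) \<le> 0)"
        using a b by (auto simp: min_def max_def)
      ultimately show ?thesis using ivt0[OF _ hcont[OF a(1) b(1)]] that by blast
    qed
    have zV: "z \<in> V" using seg[OF a(1) b(1)] z(1) by auto
    have zx: "z = x0" using neq[OF zV] z(2) by simp
    have lr: "min a b < x0" "x0 < max a b"
      using z(1) zx ax bx by (auto simp: min_def max_def split: if_splits)
    have cr: "crossing_point (g1 ` I1) (g2 ` I2) (x0, f1 x0)"
    proof (rule rect_crossing[OF lr])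
      show "g1 ` I1 \<inter> g2 ` I2 = {(x0, f1 x0)}" using pAB pe1 by simp
      show "\<And>x y. x \<in> {min a b..max a b} \<Longrightarrow> ((x, y) \<in> g1 ` I1) = (y = f1 x)"
        using graph_iff[OF cp1 xm1] seg[OF a(1) b(1)] VX1 unfolding f1_def by blast
      show "\<And>x y. x \<in> {min a b..max a b} \<Longrightarrow> ((x, y) \<in> g2 ` I2) = (y = f2 x)"
        using graph_iff[OF cp2 xm2] seg[OF a(1) b(1)] VX2 unfolding f2_def by blast
      show "continuous_on {min a b..max a b} f1" by (rule c1[OF a(1) b(1)])
      show "continuous_on {min a b..max a b} f2" by (rule c2[OF a(1) b(1)])
      show "f2 (min a b) < f1 (min a b) \<and> f1 (max a b) < f2 (max a b) \<or>
            f1 (min a b) < f2 (min a b) \<and> f2 (max a b) < f1 (max a b)"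
        using a b by (auto simp: min_def max_def)
    qed
    then show False using ncr pe1 by simp
  qed
  show ?thesis
    using x01 x02 eq0 main unfolding V_def f1_def f2_def by blast
qed

lemma no_three_card:
  fixes S :: "'a::linorder set"
  assumes "\<And>x y z. x \<in> S \<Longrightarrow> y \<in> S \<Longrightarrow> z \<in> S \<Longrightarrow> x < y \<Longrightarrow> y < z \<Longrightarrow> False"
  shows "finite S \<and> card S \<le> 2"
proof (rule ccontr)
  assume "\<not> (finite S \<and> card S \<le> 2)"
  then obtain T where T: "T \<subseteq> S" "card T = 3"
  proof (cases "finite S")
    case True
    then have "3 \<le> card S" using \<open>\<not> (finite S \<and> card S \<le> 2)\<close> by simp
    then show ?thesis using obtain_subset_with_card_n that by metis
  next
    case False
    then show ?thesis using infinite_arbitrarily_large[OF False, of 3] that by blast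
  qed
  then obtain x y z where xyz: "T = {x,y,z}" "x \<noteq> y" "y \<noteq> z" "x \<noteq> z"
    by (auto simp: card_3_iff)
  have "x \<in> S" "y \<in> S" "z \<in> S" using T xyz by auto
  note A = assms[OF \<open>x \<in> S\<close> \<open>y \<in> S\<close> \<open>z \<in> S\<close>] assms[OF \<open>x \<in> S\<close> \<open>z \<in> S\<close> \<open>y \<in> S\<close>]
    assms[OF \<open>y \<in> S\<close> \<open>x \<in> S\<close> \<open>z \<in> S\<close>] assms[OF \<open>y \<in> S\<close> \<open>z \<in> S\<close> \<open>x \<in> S\<close>]
    assms[OF \<open>z \<in> S\<close> \<open>x \<in> S\<close> \<open>y \<in> S\<close>] assms[OF \<open>z \<in> S\<close> \<open>y \<in> S\<close> \<open>x \<in> S\<close>]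
  show False
    using xyz(2-4) A
    by (cases x y rule: linorder_cases; cases y z rule: linorder_cases; cases x z rule: linorder_cases) auto
qed

lemma frontier_no_three:
  fixes U :: "real set"
  assumes "open U" "is_interval U"
  shows "finite (frontier U) \<and> card (frontier U) \<le> 2"
proof (rule no_three_card)
  fix a b c assume abc: "a \<in> frontier U" "b \<in> frontier U" "c \<in> frontier U" "a < b" "b < c"
  have cv: "convex U" using assms by (simp add: is_interval_convex_1)
  have "convex (closure U)" using cv by (rule convex_closure)
  then have ic: "is_interval (closure U)" by (simp add: is_interval_convex_1)
  have ac: "a \<in> closure U" "c \<in> closure U" using abc(1,3) by (simp_all add: frontier_def)
  have seg: "{a..c} \<subseteq> closure U"
  proof
    fix x assume "x \<in> {a..c}"
    then have "a \<le> x" "x \<le> c" by auto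
    then show "x \<in> closure U" using ic ac unfolding is_interval_1 by blast
  qed
  have "{a<..<c} \<subseteq> interior (closure U)"
    by (rule interior_maximal) (use seg in auto)
  then have "b \<in> interior (closure U)" using abc by auto
  then have "b \<in> interior U" using convex_interior_closure[OF cv] by simp
  then show False using abc(2) unfolding frontier_def by simp
qed

definition posn :: "real set \<Rightarrow> real \<Rightarrow> nat" where
  "posn E x = card {e\<in>E. e < x} + card {e\<in>E. e \<le> x}"

lemma posn_mono: "finite E \<Longrightarrow> x \<le> z \<Longrightarrow> posn E x \<le> posn E z"
  unfolding posn_def by (intro add_mono card_mono) auto

lemma posn_less: "finite E \<Longrightarrow> posn E x < posn E z \<Longrightarrow> x < z"
proof (rule ccontr)
  assume f: "finite E" and l: "posn E x < posn E z" and n: "\<not> x < z"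
  then have "posn E z \<le> posn E x" using posn_mono[OF f, of z x] by simp
  then show False using l by simp
qed

lemma posn_bound: "finite E \<Longrightarrow> posn E x \<le> 2 * card E"
proof -
  assume f: "finite E"
  have "card {e\<in>E. e < x} \<le> card E" "card {e\<in>E. e \<le> x} \<le> card E"
    using f by (auto intro: card_mono)
  then show ?thesis unfolding posn_def by simp
qed

lemma posn_eq_gap:
  assumes f: "finite E" and xz: "x < z" and eq: "posn E x = posn E z" and e: "e \<in> E"
  shows "\<not> (x \<le> e \<and> e \<le> z)"
proof
  assume xe: "x \<le> e \<and> e \<le> z"
  have s1: "{e\<in>E. e < x} \<subseteq> {e\<in>E. e < z}" and s2: "{e\<in>E. e \<le> x} \<subseteq> {e\<in>E. e \<le> z}"
    using xz by auto
  have c1: "card {e\<in>E. e < x} \<le> card {e\<in>E. e < z}" and c2: "card {e\<in>E. e \<le> x} \<le> card {e\<in>E. e \<le> z}"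
    using f s1 s2 by (auto intro: card_mono)
  have k1: "card {e\<in>E. e < x} = card {e\<in>E. e < z}" and k2: "card {e\<in>E. e \<le> x} = card {e\<in>E. e \<le> z}"
    using eq c1 c2 unfolding posn_def by linarith+
  have q1: "{e\<in>E. e < x} = {e\<in>E. e < z}"
    by (rule card_subset_eq[OF _ s1 k1]) (use f in simp)
  have q2: "{e\<in>E. e \<le> x} = {e\<in>E. e \<le> z}"
    by (rule card_subset_eq[OF _ s2 k2]) (use f in simp)
  show False
  proof (cases "e < z")
    case True
    then have "e \<in> {e\<in>E. e < z}" using e by simp
    then have "e < x" using q1 by blast
    then show False using xe by simp
  next
    case False
    then have "e \<in> {e\<in>E. e \<le> z}" using e xe by simp
    then have "e \<le> x" using q2 by blast
    then show False using xe xz False by simp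
  qed
qed

lemma gap_in:
  fixes U :: "real set"
  assumes f: "finite E" and fr: "frontier U \<subseteq> E" and zU: "z \<in> U" and eq: "posn E x = posn E z"
  shows "x \<in> U"
proof (rule ccontr)
  assume xU: "x \<notin> U"
  define a where "a = min x z"
  define b where "b = max x z"
  have "x \<noteq> z" using xU zU by blast
  then have ab: "a < b" unfolding a_def b_def by (auto simp: min_def max_def)
  have eqab: "posn E a = posn E b" using eq unfolding a_def b_def by (simp add: min_def max_def)
  have "connected {a..b}" by simp
  moreover have "z \<in> {a..b}" unfolding a_def b_def by simp
  then have "{a..b} \<inter> U \<noteq> {}" using zU by blast
  moreover have "x \<in> {a..b}" unfolding a_def b_def by simp
  then have "{a..b} - U \<noteq> {}" using xU by blast
  ultimately have "{a..b} \<inter> frontier U \<noteq> {}" by (rule connected_Int_frontier)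
  then obtain e where "e \<in> frontier U" "a \<le> e" "e \<le> b" by auto
  then show False using posn_eq_gap[OF f ab eqab] fr by blast
qed

definition Jset :: "real set \<Rightarrow> real set \<Rightarrow> nat set" where
  "Jset E U = {k. \<exists>u\<in>U. \<exists>w\<in>U. posn E u \<le> k \<and> k \<le> posn E w}"

lemma Jset_in:
  fixes U :: "real set"
  assumes f: "finite E" and fr: "frontier U \<subseteq> E" and iU: "is_interval U"
    and y: "posn E y \<in> Jset E U"
  shows "y \<in> U"
proof -
  obtain u w where u: "u \<in> U" and w: "w \<in> U" and le: "posn E u \<le> posn E y" "posn E y \<le> posn E w"
    using y unfolding Jset_def by blast
  show ?thesis
  proof (cases "posn E u = posn E y")
    case True then show ?thesis using gap_in[OF f fr u] by simp
  next
    case False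
    then have uy: "u < y" using posn_less[OF f] le by simp
    show ?thesis
    proof (cases "posn E y = posn E w")
      case True then show ?thesis using gap_in[OF f fr w] by simp
    next
      case False
      then have yw: "y < w" using posn_less[OF f] le by simp
      have "u \<le> y" "y \<le> w" using uy yw by auto
      then show ?thesis using iU u w unfolding is_interval_1 by blast
    qed
  qed
qed

lemma Jset_conv: "a \<in> Jset E U \<Longrightarrow> b \<in> Jset E U \<Longrightarrow> a \<le> k \<Longrightarrow> k \<le> b \<Longrightarrow> k \<in> Jset E U"
proof -
  assume a: "a \<in> Jset E U" and b: "b \<in> Jset E U" and k: "a \<le> k" "k \<le> b"
  obtain u where "u \<in> U" "posn E u \<le> a" using a unfolding Jset_def by blast
  moreover obtain w where "w \<in> U" "b \<le> posn E w" using b unfolding Jset_def by blast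
  ultimately have "posn E u \<le> k" "k \<le> posn E w" "u \<in> U" "w \<in> U" using k by auto
  then show "k \<in> Jset E U" unfolding Jset_def by blast
qed

lemma Jset_bound: "finite E \<Longrightarrow> Jset E U \<subseteq> {..2 * card E}"
proof
  fix k assume f: "finite E" and "k \<in> Jset E U"
  then obtain w where "k \<le> posn E w" unfolding Jset_def by blast
  then show "k \<in> {..2 * card E}" using posn_bound[OF f, of w] by simp
qed

lemma Jset_self: "u \<in> U \<Longrightarrow> posn E u \<in> Jset E U"
  unfolding Jset_def by blast

definition blk :: "nat \<Rightarrow> nat \<Rightarrow> nat set" where
  "blk l q = {q * 2^l ..< (q+1) * 2^l}"

definition canon :: "nat set \<Rightarrow> nat \<Rightarrow> nat \<Rightarrow> bool" where
  "canon J l q \<longleftrightarrow> blk l q \<subseteq> J \<and> \<not> blk (Suc l) (q div 2) \<subseteq> J"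

definition oconv :: "nat set \<Rightarrow> bool" where
  "oconv J \<longleftrightarrow> (\<forall>a b k. a \<in> J \<longrightarrow> b \<in> J \<longrightarrow> a \<le> k \<longrightarrow> k \<le> b \<longrightarrow> k \<in> J)"

lemma card_blk: "card (blk l q) = 2^l"
  unfolding blk_def by (simp add: algebra_simps)

lemma mem_blk: "p \<in> blk l (p div 2^l)"
proof -
  define P :: nat where "P = 2^l"
  define d where "d = p div P"
  define r where "r = p mod P"
  have P: "0 < P" unfolding P_def by simp
  have e: "p = d * P + r" unfolding d_def r_def by (rule div_mult_mod_eq[symmetric])
  have r: "r < P" unfolding r_def using P by simp
  have s: "(d+1)*P = d*P + P" by simp
  have "d*P \<le> p" "p < (d+1)*P" using e r s by linarith+
  then show ?thesis unfolding blk_def P_def d_def by simp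
qed

lemma canon_level_card:
  assumes cv: "oconv J"
  shows "finite {q. canon J l q} \<and> card {q. canon J l q} \<le> 2"
proof (rule no_three_card)
  fix q1 q2 q3 assume q: "q1 \<in> {q. canon J l q}" "q2 \<in> {q. canon J l q}" "q3 \<in> {q. canon J l q}"
    "q1 < q2" "q2 < q3"
  define P :: nat where "P = 2^l"
  have P0: "0 < P" unfolding P_def by simp
  define m where "m = q2 div 2"
  have m: "2*m \<le> q2" "q2 \<le> 2*m + 1" unfolding m_def by auto
  have b1: "blk l q1 \<subseteq> J" and b3: "blk l q3 \<subseteq> J" using q unfolding canon_def by auto
  have e1: "q1 * P \<in> J" using b1 P0 unfolding blk_def P_def by (auto simp: algebra_simps)
  have "q3 * P \<le> (q3+1) * P - 1" "(q3+1) * P - 1 < (q3+1) * P" using P0 by (simp_all add: algebra_simps)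
  then have "(q3+1) * P - 1 \<in> blk l q3" unfolding blk_def P_def by simp
  then have e3: "(q3+1) * P - 1 \<in> J" using b3 by blast
  have "blk (Suc l) m \<subseteq> J"
  proof
    fix k assume "k \<in> blk (Suc l) m"
    then have k: "m * (2*P) \<le> k" "k < (m+1) * (2*P)" unfolding blk_def P_def by (auto simp: algebra_simps)
    have "q1 \<le> 2*m" using m q(4) by linarith
    then have "q1 * P \<le> (2*m) * P" by (rule mult_le_mono1)
    moreover have "(2*m) * P = m * (2*P)" by simp
    ultimately have lo: "q1 * P \<le> k" using k(1) by linarith
    have "2*m + 2 \<le> q3 + 1" using m q(5) by linarith
    then have "(2*m+2) * P \<le> (q3+1) * P" by (rule mult_le_mono1)
    moreover have "(2*m+2) * P = (m+1) * (2*P)" by (simp add: algebra_simps)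
    ultimately have hi: "k \<le> (q3+1) * P - 1" using k(2) by linarith
    show "k \<in> J" using cv e1 e3 lo hi unfolding oconv_def by blast
  qed
  then show False using q(2) unfolding canon_def m_def by simp
qed

lemma canon_level_bound:
  assumes "canon J l q" "J \<subseteq> {..M}"
  shows "2^l \<le> M + 1"
proof -
  have "blk l q \<subseteq> {..M}" using assms unfolding canon_def by auto
  then have "card (blk l q) \<le> card {..M}" by (intro card_mono) auto
  then show ?thesis by (simp add: card_blk)
qed

lemma canon_exists:
  assumes pJ: "p \<in> J" and JM: "J \<subseteq> {..M}"
  shows "\<exists>l q. canon J l q \<and> p \<in> blk l q"
proof -
  define L where "L = {l. blk l (p div 2^l) \<subseteq> J}"
  have fin: "finite L"
  proof (rule finite_subset)
    show "L \<subseteq> {..M}"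
    proof
      fix l assume "l \<in> L"
      then have "blk l (p div 2^l) \<subseteq> {..M}" using JM unfolding L_def by auto
      then have "card (blk l (p div 2^l)) \<le> card {..M}" by (intro card_mono) auto
      then have "2^l \<le> M + 1" by (simp add: card_blk)
      moreover have "l < 2^l" by (rule less_exp)
      ultimately have "l \<le> M" by linarith
      then show "l \<in> {..M}" by simp
    qed
  qed simp
  have "0 \<in> L" unfolding L_def blk_def using pJ by auto
  then have ne: "L \<noteq> {}" by blast
  define l where "l = Max L"
  have lL: "l \<in> L" unfolding l_def using fin ne by (rule Max_in)
  have "Suc l \<notin> L" using Max_ge[OF fin] unfolding l_def by (metis Suc_n_not_le_n)
  moreover have "p div 2^(Suc l) = (p div 2^l) div 2"
    by (simp only: power_Suc2 div_mult2_eq)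
  ultimately have "canon J l (p div 2^l)" using lL unfolding canon_def L_def by simp
  then show ?thesis using mem_blk by blast
qed

lemma canon_Int: "canon (J1 \<inter> J2) l q \<Longrightarrow> canon J1 l q \<or> canon J2 l q"
  unfolding canon_def by auto

lemma blk_conv: "a \<in> blk l q \<Longrightarrow> b \<in> blk l q \<Longrightarrow> a \<le> k \<Longrightarrow> k \<le> b \<Longrightarrow> k \<in> blk l q"
  unfolding blk_def by auto

lemma uniq_curves:
  assumes cpc: "curve_param Ic gc" and xmc: "x_monotone (gc ` Ic)"
    and cp1: "curve_param I1 g1" and xm1: "x_monotone (g1 ` I1)"
    and cp2: "curve_param I2 g2" and xm2: "x_monotone (g2 ` I2)"
    and disj: "g1 ` I1 \<inter> g2 ` I2 = {}"
    and t1: "x1 \<in> Uc Ic gc" "fc Ic gc x1 = fc I1 g1 x1"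
    and t2: "x2 \<in> Uc Ic gc" "fc Ic gc x2 = fc I2 g2 x2"
    and seg: "{min x1 x2..max x1 x2} \<subseteq> Uc I1 g1 \<inter> Uc I2 g2"
    and sg: "((\<forall>y\<in>Uc Ic gc \<inter> Uc I1 g1. fc Ic gc y \<le> fc I1 g1 y) \<and> (\<forall>y\<in>Uc Ic gc \<inter> Uc I2 g2. fc Ic gc y \<le> fc I2 g2 y)) \<or>
             ((\<forall>y\<in>Uc Ic gc \<inter> Uc I1 g1. fc I1 g1 y \<le> fc Ic gc y) \<and> (\<forall>y\<in>Uc Ic gc \<inter> Uc I2 g2. fc I2 g2 y \<le> fc Ic gc y))"
  shows False
proof -
  define F1 where "F1 = fc I1 g1"
  define F2 where "F2 = fc I2 g2"
  define Fc where "Fc = fc Ic gc"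
  define a where "a = min x1 x2"
  define b where "b = max x1 x2"
  have ab: "a \<le> b" unfolding a_def b_def by simp
  have x1s: "x1 \<in> {a..b}" and x2s: "x2 \<in> {a..b}" unfolding a_def b_def by auto
  have x1U: "x1 \<in> Uc I1 g1 \<inter> Uc I2 g2" using seg x1s unfolding a_def b_def by blast
  have x2U: "x2 \<in> Uc I1 g1 \<inter> Uc I2 g2" using seg x2s unfolding a_def b_def by blast
  have sX: "{a..b} \<subseteq> Xc I1 g1 \<inter> Xc I2 g2"
    using seg U_sub[OF cp1 xm1] U_sub[OF cp2 xm2] unfolding a_def b_def by blast
  have hc: "continuous_on {a..b} (\<lambda>y. F1 y - F2 y)"
    using continuous_on_subset[OF fc_cont[OF cp1 xm1]] continuous_on_subset[OF fc_cont[OF cp2 xm2]] sX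
    unfolding F1_def F2_def by (intro continuous_intros) auto
  have e1: "F1 x1 = Fc x1" and e2: "F2 x2 = Fc x2" using t1 t2 unfolding F1_def F2_def Fc_def by simp_all
  have sg2: "(F2 x1 \<ge> Fc x1 \<and> F1 x2 \<ge> Fc x2) \<or> (F2 x1 \<le> Fc x1 \<and> F1 x2 \<le> Fc x2)"
    using sg t1(1) t2(1) x1U x2U unfolding F1_def F2_def Fc_def by blast
  have "((\<lambda>y. F1 y - F2 y) a \<le> 0 \<and> 0 \<le> (\<lambda>y. F1 y - F2 y) b) \<or> (0 \<le> (\<lambda>y. F1 y - F2 y) a \<and> (\<lambda>y. F1 y - F2 y) b \<le> 0)"
  proof (cases "x1 \<le> x2")
    case True
    then have "a = x1" "b = x2" unfolding a_def b_def by auto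
    then show ?thesis using sg2 e1 e2 by auto
  next
    case False
    then have "a = x2" "b = x1" unfolding a_def b_def by auto
    then show ?thesis using sg2 e1 e2 by auto
  qed
  then obtain z where z: "z \<in> {a..b}" "F1 z - F2 z = 0" using ivt0[OF ab hc] by blast
  have zX1: "z \<in> Xc I1 g1" and zX2: "z \<in> Xc I2 g2" using sX z(1) by auto
  have "(z, F1 z) \<in> g1 ` I1" using graph_iff[OF cp1 xm1, of z "F1 z"] zX1 unfolding F1_def by simp
  moreover have "(z, F2 z) \<in> g2 ` I2" using graph_iff[OF cp2 xm2, of z "F2 z"] zX2 unfolding F2_def by simp
  ultimately show False using disj z(2) by auto
qed

lemma level_bound:
  fixes l N :: nat
  assumes "2^l \<le> N"
  shows "l < nat \<lfloor>log 2 (real N)\<rfloor> + 1"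
proof -
  have "real l \<le> log 2 (real N)" using le_log2_of_power[OF assms] by simp
  then have "int l \<le> \<lfloor>log 2 (real N)\<rfloor>" by (simp add: le_floor_iff)
  then show ?thesis by linarith
qed

lemma main_count:
  fixes n :: nat and I :: "nat \<Rightarrow> real set" and \<gamma> :: "nat \<Rightarrow> real \<Rightarrow> real \<times> real" and red :: "nat \<Rightarrow> bool"
  assumes cp: "\<forall>i<n. curve_param (I i) (\<gamma> i)" and xm: "\<forall>i<n. x_monotone (\<gamma> i ` I i)"
    and mono: "\<forall>i<n. \<forall>j<n. i \<noteq> j \<and> red i = red j \<longrightarrow> \<gamma> i ` I i \<inter> \<gamma> j ` I j = {}"
  shows "card {(i, j). i < j \<and> j < n \<and> touching (I i) (\<gamma> i) (I j) (\<gamma> j)}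
           \<le> 4 * n * (nat \<lfloor>log 2 (real (4*n+1))\<rfloor> + 1)"
proof -
  define T where "T = {(i, j). i < j \<and> j < n \<and> touching (I i) (\<gamma> i) (I j) (\<gamma> j)}"
  define U where "U = (\<lambda>i. Uc (I i) (\<gamma> i))"
  define F where "F = (\<lambda>i. fc (I i) (\<gamma> i))"
  define E where "E = (\<Union>i<n. frontier (U i))"
  define J where "J = (\<lambda>i. Jset E (U i))"
  define Mx where "Mx = 2 * card E"
  define Lm where "Lm = nat \<lfloor>log 2 (real (4*n+1))\<rfloor> + 1"
  define tan where "tan = (\<lambda>c d x. x \<in> U c \<inter> U d \<and> F c x = F d x \<and>
       ((\<forall>y\<in>U c \<inter> U d. F c y \<le> F d y) \<or> (\<forall>y\<in>U c \<inter> U d. F d y \<le> F c y)))"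
  define pd where "pd = (\<lambda>i j c::nat. if c = i then j else i)"
  have cpi: "\<And>i. i < n \<Longrightarrow> curve_param (I i) (\<gamma> i)" using cp by blast
  have xmi: "\<And>i. i < n \<Longrightarrow> x_monotone (\<gamma> i ` I i)" using xm by blast
  have Uo: "\<And>i. i < n \<Longrightarrow> open (U i)" unfolding U_def using U_open cpi xmi by blast
  have Ui: "\<And>i. i < n \<Longrightarrow> is_interval (U i)" unfolding U_def using U_interval cpi xmi by blast
  have fr: "\<And>i. i < n \<Longrightarrow> finite (frontier (U i)) \<and> card (frontier (U i)) \<le> 2"
    using frontier_no_three Uo Ui by blast
  have finE: "finite E" unfolding E_def using fr by blast
  have "card E \<le> (\<Sum>i<n. card (frontier (U i)))" unfolding E_def by (rule card_UN_le) simp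
  also have "\<dots> \<le> (\<Sum>i<n. 2)" using fr by (intro sum_mono) auto
  finally have cardE: "card E \<le> 2 * n" by simp
  have frE: "\<And>i. i < n \<Longrightarrow> frontier (U i) \<subseteq> E" unfolding E_def by blast
  have JM: "\<And>i. J i \<subseteq> {..Mx}" unfolding J_def Mx_def using Jset_bound[OF finE] by blast
  have Jc: "\<And>i. oconv (J i)" unfolding J_def oconv_def using Jset_conv by blast
  have Jin: "\<And>i y. i < n \<Longrightarrow> posn E y \<in> J i \<Longrightarrow> y \<in> U i"
    unfolding J_def using Jset_in[OF finE] frE Ui by blast
  have tan_sym: "\<And>c d x. tan c d x \<longleftrightarrow> tan d c x" unfolding tan_def by (auto simp add: Int_commute)
  have Tprop: "\<And>i j. (i, j) \<in> T \<longleftrightarrow> i < j \<and> j < n \<and> touching (I i) (\<gamma> i) (I j) (\<gamma> j)"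
    unfolding T_def by simp
  have Ttan: "\<forall>p\<in>T. \<exists>x. tan (fst p) (snd p) x"
  proof
    fix p assume "p \<in> T"
    then obtain i j where p: "p = (i, j)" "i < j" "j < n" "touching (I i) (\<gamma> i) (I j) (\<gamma> j)"
      unfolding T_def by blast
    have "i < n" using p by simp
    have "\<exists>x. tan i j x"
      unfolding tan_def U_def F_def
      by (rule touching_tan[OF cpi[OF \<open>i < n\<close>] xmi[OF \<open>i < n\<close>] cpi[OF p(3)] xmi[OF p(3)] p(4)])
    then show "\<exists>x. tan (fst p) (snd p) x" using p(1) by simp
  qed
  then obtain tx where tx: "\<forall>p\<in>T. tan (fst p) (snd p) (tx p)" using bchoice[OF Ttan] by blast
  have colors: "\<And>i j. (i, j) \<in> T \<Longrightarrow> red i \<noteq> red j"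
  proof
    fix i j assume ij: "(i, j) \<in> T" and r: "red i = red j"
    then have ij2: "i < j" "j < n" "touching (I i) (\<gamma> i) (I j) (\<gamma> j)" using Tprop by auto
    then have "\<gamma> i ` I i \<inter> \<gamma> j ` I j \<noteq> {}" unfolding touching_def by auto
    moreover have "\<gamma> i ` I i \<inter> \<gamma> j ` I j = {}" using mono ij2 r by auto
    ultimately show False by blast
  qed
  define G where "G = (\<lambda>i j c l q s. (c = i \<or> c = j) \<and> canon (J c) l q \<and> blk l q \<subseteq> J (pd i j c) \<and>
       posn E (tx (i, j)) \<in> blk l q \<and> (s \<longleftrightarrow> (\<forall>y\<in>U c \<inter> U (pd i j c). F c y \<le> F (pd i j c) y)))"
  have Gex: "\<forall>p\<in>T. \<exists>k. \<exists>c l q s. k = (c, l, q, s) \<and> G (fst p) (snd p) c l q s"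
  proof
    fix p assume pT: "p \<in> T"
    then obtain i j where p: "p = (i, j)" by (cases p)
    have ij: "i < j" "j < n" using pT p Tprop by auto
    have t: "tan i j (tx (i, j))" using tx pT p by auto
    have "posn E (tx (i, j)) \<in> J i \<inter> J j"
      using t unfolding tan_def J_def by (auto intro: Jset_self)
    moreover have "J i \<inter> J j \<subseteq> {..Mx}" using JM by blast
    ultimately obtain l q where lq: "canon (J i \<inter> J j) l q" "posn E (tx (i, j)) \<in> blk l q"
      using canon_exists by blast
    have bij: "blk l q \<subseteq> J i" "blk l q \<subseteq> J j" using lq(1) unfolding canon_def by auto
    have ij': "i \<noteq> j" using ij by simp
    show "\<exists>k. \<exists>c l q s. k = (c, l, q, s) \<and> G (fst p) (snd p) c l q s"
    proof (cases "canon (J i) l q")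
      case True
      have "G i j i l q (\<forall>y\<in>U i \<inter> U (pd i j i). F i y \<le> F (pd i j i) y)"
        unfolding G_def using True bij lq(2) by (simp add: pd_def)
      then show ?thesis using p by auto
    next
      case False
      then have cj: "canon (J j) l q" using canon_Int[OF lq(1)] by blast
      have "G i j j l q (\<forall>y\<in>U j \<inter> U (pd i j j). F j y \<le> F (pd i j j) y)"
        unfolding G_def using cj bij lq(2) ij' by (simp add: pd_def)
      then show ?thesis using p by auto
    qed
  qed
  then obtain key where key: "\<forall>p\<in>T. \<exists>c l q s. key p = (c, l, q, s) \<and> G (fst p) (snd p) c l q s"
    using bchoice[OF Gex] by blast
  have core: "\<And>i j i' j' c l q s. (i, j) \<in> T \<Longrightarrow> (i', j') \<in> T \<Longrightarrow> G i j c l q s \<Longrightarrow> G i' j' c l q s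
      \<Longrightarrow> (i, j) = (i', j')"
  proof -
    fix i j i' j' c l q s
    assume T1: "(i, j) \<in> T" and T2: "(i', j') \<in> T" and G1: "G i j c l q s" and G2: "G i' j' c l q s"
    have ij: "i < j" "j < n" and ij': "i' < j'" "j' < n" using T1 T2 Tprop by auto
    define d where "d = pd i j c"
    define d' where "d' = pd i' j' c"
    have cij: "c = i \<or> c = j" and cij': "c = i' \<or> c = j'" using G1 G2 unfolding G_def by auto
    have dd: "d = d'"
    proof (rule ccontr)
      assume ne: "d \<noteq> d'"
      have cn: "c < n" using cij ij by auto
      have dn: "d < n" and dn': "d' < n" using ij ij' unfolding d_def d'_def pd_def by auto
      have rd: "red c \<noteq> red d"
        using colors[OF T1] cij unfolding d_def pd_def by (cases "c = i") auto
      have rd': "red c \<noteq> red d'"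
        using colors[OF T2] cij' unfolding d'_def pd_def by (cases "c = i'") auto
      have "red d = red d'" using rd rd' by blast
      then have disj: "\<gamma> d ` I d \<inter> \<gamma> d' ` I d' = {}" using mono dn dn' ne by blast
      define x where "x = tx (i, j)"
      define x' where "x' = tx (i', j')"
      have tx1: "tan i j x" using tx T1 unfolding x_def by auto
      have tx2: "tan i' j' x'" using tx T2 unfolding x'_def by auto
      have tc1: "tan c d x" using tx1 tan_sym cij ij unfolding d_def pd_def by (cases "c = i") auto
      have tc2: "tan c d' x'" using tx2 tan_sym cij' ij' unfolding d'_def pd_def by (cases "c = i'") auto
      have bd: "blk l q \<subseteq> J d" "blk l q \<subseteq> J d'" using G1 G2 unfolding G_def d_def d'_def by auto
      have px: "posn E x \<in> blk l q" "posn E x' \<in> blk l q" using G1 G2 unfolding G_def x_def x'_def by auto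
      have seg: "{min x x'..max x x'} \<subseteq> U d \<inter> U d'"
      proof
        fix y assume y: "y \<in> {min x x'..max x x'}"
        have "posn E (min x x') \<le> posn E y" "posn E y \<le> posn E (max x x')"
          using y posn_mono[OF finE] by auto
        moreover have "posn E (min x x') \<in> blk l q" "posn E (max x x') \<in> blk l q"
          using px by (auto simp: min_def max_def)
        ultimately have "posn E y \<in> blk l q" using blk_conv by blast
        then show "y \<in> U d \<inter> U d'" using bd Jin dn dn' by blast
      qed
      have s1: "s \<longleftrightarrow> (\<forall>y\<in>U c \<inter> U d. F c y \<le> F d y)" using G1 unfolding G_def d_def by auto
      have s2: "s \<longleftrightarrow> (\<forall>y\<in>U c \<inter> U d'. F c y \<le> F d' y)" using G2 unfolding G_def d'_def by auto
      have sg: "((\<forall>y\<in>U c \<inter> U d. F c y \<le> F d y) \<and> (\<forall>y\<in>U c \<inter> U d'. F c y \<le> F d' y)) \<or>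
             ((\<forall>y\<in>U c \<inter> U d. F d y \<le> F c y) \<and> (\<forall>y\<in>U c \<inter> U d'. F d' y \<le> F c y))"
        using s1 s2 tc1 tc2 unfolding tan_def by blast
      show False
        using uniq_curves[OF cpi[OF cn] xmi[OF cn] cpi[OF dn] xmi[OF dn] cpi[OF dn'] xmi[OF dn'] disj,
            of x x'] tc1 tc2 seg sg
        unfolding tan_def U_def F_def by blast
    qed
    show "(i, j) = (i', j')"
      using dd cij cij' ij ij' unfolding d_def d'_def pd_def by (auto split: if_splits)
  qed
  have inj: "inj_on key T"
  proof (rule inj_onI)
    fix p p' assume p: "p \<in> T" and p': "p' \<in> T" and e: "key p = key p'"
    obtain c l q s where k1: "key p = (c, l, q, s)" "G (fst p) (snd p) c l q s" using key p by blast
    obtain c' l' q' s' where k2: "key p' = (c', l', q', s')" "G (fst p') (snd p') c' l' q' s'" using key p' by blast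
    have "c' = c" "l' = l" "q' = q" "s' = s" using e k1 k2 by auto
    then have "G (fst p') (snd p') c l q s" using k2 by simp
    moreover have "(fst p, snd p) \<in> T" "(fst p', snd p') \<in> T" using p p' by auto
    ultimately have "(fst p, snd p) = (fst p', snd p')" using core k1(2) by blast
    then show "p = p'" by (simp add: prod_eq_iff)
  qed
  define K where "K = (\<Union>c\<in>{..<n}. \<Union>l\<in>{..<Lm}. (\<lambda>(q, s). (c, l, q, s)) ` ({q. canon (J c) l q} \<times> (UNIV :: bool set)))"
  have lvl: "\<And>c l q. canon (J c) l q \<Longrightarrow> l < Lm"
  proof -
    fix c l q assume "canon (J c) l q"
    then have "2^l \<le> Mx + 1" using canon_level_bound JM by blast
    also have "\<dots> \<le> 4 * n + 1" unfolding Mx_def using cardE by simp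
    finally show "l < Lm" unfolding Lm_def by (rule level_bound)
  qed
  have keyK: "key ` T \<subseteq> K"
  proof
    fix k assume "k \<in> key ` T"
    then obtain p where p: "p \<in> T" "k = key p" by blast
    obtain c l q s where k1: "key p = (c, l, q, s)" "G (fst p) (snd p) c l q s" using key p by blast
    have "fst p < snd p" "snd p < n" using p Tprop by (cases p; auto)+
    then have cn: "c < n" using k1(2) unfolding G_def by auto
    have cl: "canon (J c) l q" using k1(2) unfolding G_def by auto
    then have "l < Lm" by (rule lvl)
    then show "k \<in> K" unfolding K_def using cn cl p k1 by force
  qed
  have finq: "\<And>c l. finite {q. canon (J c) l q} \<and> card {q. canon (J c) l q} \<le> 2"
    using canon_level_card Jc by blast
  have finK: "finite K" unfolding K_def using finq by auto
  have "card K \<le> (\<Sum>c<n. card (\<Union>l\<in>{..<Lm}. (\<lambda>(q, s). (c, l, q, s)) ` ({q. canon (J c) l q} \<times> (UNIV :: bool set))))"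
    unfolding K_def by (rule card_UN_le) simp
  also have "\<dots> \<le> (\<Sum>c<n. 4 * Lm)"
  proof (rule sum_mono)
    fix c assume "c \<in> {..<n}"
    have "card (\<Union>l\<in>{..<Lm}. (\<lambda>(q, s). (c, l, q, s)) ` ({q. canon (J c) l q} \<times> (UNIV :: bool set)))
        \<le> (\<Sum>l<Lm. card ((\<lambda>(q, s). (c, l, q, s)) ` ({q. canon (J c) l q} \<times> (UNIV :: bool set))))"
      by (rule card_UN_le) simp
    also have "\<dots> \<le> (\<Sum>l<Lm. 4)"
    proof (rule sum_mono)
      fix l assume "l \<in> {..<Lm}"
      have "card ((\<lambda>(q, s). (c, l, q, s)) ` ({q. canon (J c) l q} \<times> (UNIV :: bool set)))
          \<le> card ({q. canon (J c) l q} \<times> (UNIV :: bool set))" by (rule card_image_le) (use finq in simp)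
      also have "\<dots> = card {q. canon (J c) l q} * 2" by (simp add: card_cartesian_product)
      also have "\<dots> \<le> 4" using finq[of c l] by simp
      finally show "card ((\<lambda>(q, s). (c, l, q, s)) ` ({q. canon (J c) l q} \<times> (UNIV :: bool set))) \<le> 4" .
    qed
    finally show "card (\<Union>l\<in>{..<Lm}. (\<lambda>(q, s). (c, l, q, s)) ` ({q. canon (J c) l q} \<times> (UNIV :: bool set))) \<le> 4 * Lm"
      by simp
  qed
  also have "\<dots> = 4 * n * Lm" by simp
  finally have cK: "card K \<le> 4 * n * Lm" .
  have "card T \<le> card K" by (rule card_inj_on_le[OF inj keyK finK])
  then show ?thesis using cK unfolding T_def Lm_def by simp
qed

lemma final_arith:
  fixes n :: nat
  assumes n2: "2 \<le> n"
  shows "real (4 * n * (nat \<lfloor>log 2 (real (4*n+1))\<rfloor> + 1)) \<le> 30 * real n * ln (real n)"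
proof -
  define L where "L = log 2 (real (4*n+1))"
  have rn: "2 \<le> real n" using n2 by simp
  have L0: "0 \<le> L" unfolding L_def by simp
  have fl: "real (nat \<lfloor>L\<rfloor>) \<le> L" using L0 by linarith
  have "real n ^ 3 \<ge> 2 ^ 3" using rn by (rule power_mono) simp
  then have "real n * real n ^ 3 \<ge> real n * 8" using rn by (intro mult_left_mono) auto
  moreover have e: "real n ^ 4 = real n * real n ^ 3" by (simp add: eval_nat_numeral)
  moreover have "real (4*n+1) = 4 * real n + 1" by simp
  ultimately have p4: "real (4*n+1) \<le> real n ^ 4" using rn by linarith
  have "ln (real (4*n+1)) \<le> ln (real n ^ 4)" using p4 n2 by (subst ln_le_cancel_iff) auto
  also have "\<dots> = 4 * ln (real n)" using rn by (simp add: ln_realpow)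
  finally have l1: "ln (real (4*n+1)) \<le> 4 * ln (real n)" .
  have ln2: "2/3 \<le> ln (2::real)" by (rule ln2_ge_two_thirds)
  have ln2p: "0 < ln (2::real)" by simp
  have lnn: "ln 2 \<le> ln (real n)" using rn by simp
  have "L = ln (real (4*n+1)) / ln 2" unfolding L_def by (simp add: log_def)
  then have "L * ln 2 \<le> 4 * ln (real n)" using l1 ln2p by simp
  then have "(L + 1) * ln 2 \<le> 5 * ln (real n)" using lnn by (simp add: algebra_simps)
  moreover have "(L + 1) * (2/3) \<le> (L + 1) * ln 2" using ln2 L0 by (intro mult_left_mono) auto
  ultimately have "(L + 1) * (2/3) \<le> 5 * ln (real n)" by (rule order_trans[rotated])
  then have "2/3 * L + 2/3 \<le> 5 * ln (real n)" by (simp add: algebra_simps)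
  then have "(L + 1) \<le> 15/2 * ln (real n)" by linarith
  then have "real (nat \<lfloor>L\<rfloor>) + 1 \<le> 15/2 * ln (real n)" using fl by linarith
  then have "4 * real n * (real (nat \<lfloor>L\<rfloor>) + 1) \<le> 4 * real n * (15/2 * ln (real n))"
    using rn by (intro mult_left_mono) auto
  then show ?thesis unfolding L_def by (simp add: algebra_simps)
qed

lemma bound_n:
  fixes n :: nat and I :: "nat \<Rightarrow> real set" and \<gamma> :: "nat \<Rightarrow> real \<Rightarrow> real \<times> real" and red :: "nat \<Rightarrow> bool"
  assumes n2: "2 \<le> n"
    and cp: "\<forall>i<n. curve_param (I i) (\<gamma> i)" and xm: "\<forall>i<n. x_monotone (\<gamma> i ` I i)"
    and mono: "\<forall>i<n. \<forall>j<n. i \<noteq> j \<and> red i = red j \<longrightarrow> \<gamma> i ` I i \<inter> \<gamma> j ` I j = {}"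
  shows "real (card {(i, j). i < j \<and> j < n \<and> touching (I i) (\<gamma> i) (I j) (\<gamma> j)})
           \<le> 30 * real n * ln (real n)"
proof -
  have c: "card {(i, j). i < j \<and> j < n \<and> touching (I i) (\<gamma> i) (I j) (\<gamma> j)}
           \<le> 4 * n * (nat \<lfloor>log 2 (real (4*n+1))\<rfloor> + 1)"
    by (rule main_count[OF cp xm mono])
  then have "real (card {(i, j). i < j \<and> j < n \<and> touching (I i) (\<gamma> i) (I j) (\<gamma> j)})
           \<le> real (4 * n * (nat \<lfloor>log 2 (real (4*n+1))\<rfloor> + 1))" by (simp only: of_nat_le_iff)
  also have "\<dots> \<le> 30 * real n * ln (real n)" by (rule final_arith[OF n2])
  finally show ?thesis .
qed

theorem theorem1:
  shows "\<exists>C>0. \<forall>n::nat. n \<ge> 2 \<longrightarrow>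
    (\<forall>(I :: nat \<Rightarrow> real set) (\<gamma> :: nat \<Rightarrow> real \<Rightarrow> real \<times> real) (red :: nat \<Rightarrow> bool).
      (\<forall>i<n. curve_param (I i) (\<gamma> i)) \<and>
      (\<forall>i<n. x_monotone (\<gamma> i ` I i)) \<and>
      (\<forall>i<n. \<forall>j<n. i \<noteq> j \<longrightarrow> finite (\<gamma> i ` I i \<inter> \<gamma> j ` I j)) \<and>
      (\<forall>i<n. \<forall>j<n. \<forall>k<n. i \<noteq> j \<and> j \<noteq> k \<and> i \<noteq> k \<longrightarrow>
          \<gamma> i ` I i \<inter> \<gamma> j ` I j \<inter> \<gamma> k ` I k = {}) \<and>
      (\<forall>i<n. \<forall>j<n. i \<noteq> j \<and> red i = red j \<longrightarrow> \<gamma> i ` I i \<inter> \<gamma> j ` I j = {})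
      \<longrightarrow> real (card {(i, j). i < j \<and> j < n \<and> touching (I i) (\<gamma> i) (I j) (\<gamma> j)})
            \<le> C * real n * ln (real n))"
  apply (rule exI[of _ 30])
  apply (rule conjI)
   apply simp
  apply (intro allI impI)
  apply (elim conjE)
  apply (rule bound_n)
     apply assumption+
  done

end
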